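(* Let $L$ be an i--lattice and let $\theta\in{\rm Con}(L)$ be such that every $\alpha\in{\rm Con}(L)$ satisfies $\alpha\subseteq\theta$ or $\theta\subseteq\alpha$. Then $\theta\in{\rm Con}_{\mathbb{I}}(L)$.
   Context: An i--lattice is a lattice $L$ with a unary operation $'$ such that $a''=a$ and $a\leq b$ implies $b'\leq a'$ for all $a,b\in L$. ${\rm Con}(L)$ is the lattice of lattice congruences of $L$, and ${\rm Con}_{\mathbb{I}}(L)$ is the set of lattice congruences $\theta$ that also preserve the involution, i.e. $(a,b)\in\theta$ implies $(a',b')\in\theta$. *)

theory Defs
  imports Main
begin

definition i_lattice :: "('a::lattice \<Rightarrow> 'a) \<Rightarrow> bool" where
  "i_lattice neg \<longleftrightarrow> (\<forall>a. neg (neg a) = a) \<and> (\<forall>a b. a \<le> b \<longrightarrow> neg b \<le> neg a)"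

definition lattice_congruences :: "('a::lattice \<times> 'a) set set" where
  "lattice_congruences = {\<theta>. equiv UNIV \<theta> \<and>
     (\<forall>a b c d. (a, b) \<in> \<theta> \<and> (c, d) \<in> \<theta> \<longrightarrow>
        (sup a c, sup b d) \<in> \<theta> \<and> (inf a c, inf b d) \<in> \<theta>)}"

definition i_congruences :: "('a::lattice \<Rightarrow> 'a) \<Rightarrow> ('a \<times> 'a) set set" where
  "i_congruences neg = {\<theta>. \<theta> \<in> lattice_congruences \<and>
     (\<forall>a b. (a, b) \<in> \<theta> \<longrightarrow> (neg a, neg b) \<in> \<theta>)}"

end

theory Submission
  imports Defs
begin

lemma neg_props:
  fixes neg :: "'a::lattice \<Rightarrow> 'a"
  assumes "i_lattice neg"
  shows nn: "neg (neg a) = a"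
    and ns: "neg (sup a b) = inf (neg a) (neg b)"
    and ni: "neg (inf a b) = sup (neg a) (neg b)"
proof -
  have inv: "\<And>a. neg (neg a) = a" and mon: "\<And>a b. a \<le> b \<Longrightarrow> neg b \<le> neg a"
    using assms unfolding i_lattice_def by auto
  show "neg (neg a) = a" by (rule inv)
  show "neg (sup a b) = inf (neg a) (neg b)"
  proof (rule antisym)
    show "neg (sup a b) \<le> inf (neg a) (neg b)" by (simp add: mon)
    have "a \<le> neg (inf (neg a) (neg b))" using mon[of "inf (neg a) (neg b)" "neg a"] inv by simp
    moreover have "b \<le> neg (inf (neg a) (neg b))" using mon[of "inf (neg a) (neg b)" "neg b"] inv by simp
    ultimately have "sup a b \<le> neg (inf (neg a) (neg b))" by simp
    from mon[OF this] show "inf (neg a) (neg b) \<le> neg (sup a b)" using inv by simp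
  qed
  show "neg (inf a b) = sup (neg a) (neg b)"
  proof (rule antisym)
    show "sup (neg a) (neg b) \<le> neg (inf a b)" by (simp add: mon)
    have "neg (sup (neg a) (neg b)) \<le> a" using mon[of "neg a" "sup (neg a) (neg b)"] inv by simp
    moreover have "neg (sup (neg a) (neg b)) \<le> b" using mon[of "neg b" "sup (neg a) (neg b)"] inv by simp
    ultimately have "neg (sup (neg a) (neg b)) \<le> inf a b" by simp
    from mon[OF this] show "neg (inf a b) \<le> sup (neg a) (neg b)" using inv by simp
  qed
qed

theorem proposition4p6:
  fixes neg :: "'a::lattice \<Rightarrow> 'a" and \<theta> :: "('a \<times> 'a) set"
  assumes "i_lattice neg"
    and "\<theta> \<in> lattice_congruences"
    and "\<forall>\<alpha>\<in>lattice_congruences. \<alpha> \<subseteq> \<theta> \<or> \<theta> \<subseteq> \<alpha>"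
  shows "\<theta> \<in> i_congruences neg"
proof -
  note nn = neg_props(1)[OF assms(1)] and ns = neg_props(2)[OF assms(1)]
    and ni = neg_props(3)[OF assms(1)]
  have eq: "equiv UNIV \<theta>" and comp: "\<And>a b c d. (a, b) \<in> \<theta> \<Longrightarrow> (c, d) \<in> \<theta> \<Longrightarrow>
        (sup a c, sup b d) \<in> \<theta> \<and> (inf a c, inf b d) \<in> \<theta>"
    using assms(2) unfolding lattice_congruences_def by auto
  have rf: "\<And>x. (x,x) \<in> \<theta>" using eq by (simp add: equiv_def refl_on_def)
  have sy: "\<And>x y. (x,y) \<in> \<theta> \<Longrightarrow> (y,x) \<in> \<theta>" using eq by (meson equiv_def symD)
  have tr: "\<And>x y z. (x,y) \<in> \<theta> \<Longrightarrow> (y,z) \<in> \<theta> \<Longrightarrow> (x,z) \<in> \<theta>" using eq by (meson equiv_def transD)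
  define \<theta>' where "\<theta>' = {(x, y). (neg x, neg y) \<in> \<theta>}"
  have "\<theta>' \<in> lattice_congruences"
    unfolding lattice_congruences_def
  proof (intro CollectI conjI allI impI)
    show "equiv UNIV \<theta>'" unfolding equiv_def refl_on_def sym_def trans_def \<theta>'_def
      using rf sy tr by blast
    fix a b c d assume h: "(a, b) \<in> \<theta>' \<and> (c, d) \<in> \<theta>'"
    hence h1: "(neg a, neg b) \<in> \<theta>" "(neg c, neg d) \<in> \<theta>" by (auto simp: \<theta>'_def)
    show "(sup a c, sup b d) \<in> \<theta>'" using comp[OF h1] by (simp add: \<theta>'_def ns)
    show "(inf a c, inf b d) \<in> \<theta>'" using comp[OF h1] by (simp add: \<theta>'_def ni)
  qed
  with assms(3) have "\<theta>' \<subseteq> \<theta> \<or> \<theta> \<subseteq> \<theta>'" by blast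
  hence "\<forall>a b. (a, b) \<in> \<theta> \<longrightarrow> (neg a, neg b) \<in> \<theta>"
  proof
    assume "\<theta>' \<subseteq> \<theta>"
    thus ?thesis unfolding \<theta>'_def using nn by (metis (mono_tags, lifting) case_prodI mem_Collect_eq subsetD)
  next
    assume "\<theta> \<subseteq> \<theta>'"
    thus ?thesis unfolding \<theta>'_def by blast
  qed
  thus ?thesis using assms(2) unfolding i_congruences_def by blast
qed

end
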